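(* Let $n,m$ be integers with $0<m<n$. Let $f_n\in\mathcal{V}_n^m$, $g_n\in\mathcal{W}_n^m$, and $f_{3n}=f_n+g_n\in\mathcal{V}_{3n}^m$, with expansions $f_n=\sum_{k=1}^na_{n,k}\tilde\varphi_{n,k}^m$, $g_n=\sum_{h=1}^{2n}b_{n,h}\tilde\psi_{n,h}^m$, $f_{3n}=\sum_{j=1}^{3n}a_{3n,j}\tilde\varphi_{3n,j}^m$, and set $\vec a_n=(a_{n,k})_{k=1}^n$, $\vec b_n=(b_{n,h})_{h=1}^{2n}$, $\vec a_{3n}=(a_{3n,j})_{j=1}^{3n}$. Define $A\in\mathbb{R}^{n\times3n}$ and $B\in\mathbb{R}^{2n\times3n}$ by $$A_{k,j}=\sum_{s=0}^{n-m}\tau_{s,k}^n\tau_{s,j}^{3n}+\sum_{s=n-m+1}^{n-1}\tau_{s,k}^n\big[\mu_{n,s}^m\tau_{s,j}^{3n}-\mu_{n,2n-s}^m\tau_{2n-s,j}^{3n}\big],$$ $$B_{h,j}=\sum_{r=n}^{n+m-1}\frac{\sigma_{r,h}^n}{\sqrt{v_{n,r}^m}}\big[\mu_{n,r}^m\tau_{2n-r,j}^{3n}+\mu_{n,2n-r}^m\tau_{r,j}^{3n}\big]+\sum_{r=n+m}^{3n-m}\frac{\sigma_{r,h}^n}{\sqrt{v_{n,r}^m}}\tau_{r,j}^{3n}+\sum_{r=3n-m+1}^{3n-1}\sigma_{r,h}^n\sqrt{v_{n,r}^m}\,\tau_{r,j}^{3n}.$$ Then $\vec a_n=A\vec a_{3n}$,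 $\vec b_n=B\vec a_{3n}$, and $\vec a_{3n}=A^T\vec a_n+B^T\vec b_n$.
   Context: Let $w(x)=(1-x^2)^{-1/2}$ on $[-1,1]$, $\langle f,g\rangle_{L^2_w}=\int_{-1}^1fgw\,dx$. Orthonormal Chebyshev polynomials: $p_0=\sqrt{1/\pi}$, $p_r(x)=\sqrt{2/\pi}\cos(r\arccos x)$, $r\ge1$. Chebyshev nodes $x_k^N=\cos\frac{(2k-1)\pi}{2N}$, $k=1,\ldots,N$; $Y_n=\{x_k^{3n}\}_{k=1}^{3n}\setminus\{x_k^n\}_{k=1}^n=\{y_k^n:k=1,\ldots,2n\}$. For $0<m<N$: $\mu_{N,r}^m=1$ if $0\le r\le N-m$, $\frac{m+N-r}{2m}$ if $N-m<r<N+m$, $0$ otherwise; for $r=0,\ldots,N-1$: $q_{N,r}^m=p_r$ if $r\le N-m$, $q_{N,r}^m=\mu_{N,r}^mp_r-\mu_{N,2N-r}^mp_{2N-r}$ if $N-m<r<N$; $\nu_{N,r}^m=1$ if $r\le N-m$, $\frac{m^2+(N-r)^2}{2m^2}$ if $N-m<r<N$; $\tau_{r,k}^N=\sqrt{\frac{\pi}{N\nu_{N,r}^m}}p_r(x_k^N)$; $\tilde\varphi_{N,k}^m=\sum_{r=0}^{N-1}\tau_{r,k}^Nq_{N,r}^m$ ($k=1,\ldots,N$), an orthonormal basis of $\mathcal{V}_N^m=\mathrm{span}\{q_{N,r}^m\}_{r=0}^{N-1}$. $\mathcal{W}_n^m$ is the orthogonal complement of $\mathcal{V}_n^m$ in $\mathcal{V}_{3n}^m$.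 For $r=n,\ldots,3n-1$: $\tilde q_{n,r}^m=\mu_{n,r}^mp_{2n-r}+\mu_{n,2n-r}^mp_r$ if $n\le r<n+m$, $p_r$ if $n+m\le r\le3n-m$, $q_{3n,r}^m$ if $3n-m<r<3n$; $v_{n,r}^m=\frac{m^2+(n-r)^2}{2m^2}$ if $n<r<n+m$, $1$ if $r=n$ or $n+m\le r\le3n-m$, $\frac{m^2+(3n-r)^2}{2m^2}$ if $3n-m<r<3n$. For $k=1,\ldots,2n$: $\sigma_{r,k}^n=\sqrt{\frac{\pi}{3n}}\,c_{r,k}$ with $c_{r,k}=p_n(y_k^n)$ if $r=n$, $\frac{p_r(y_k^n)+p_{2n-r}(y_k^n)}{\sqrt2}$ if $n<r<2n$, $\frac{p_{2n}(y_k^n)+\sqrt2p_0(y_k^n)}{\sqrt3}$ if $r=2n$, $\sqrt{3/2}\,p_r(y_k^n)$ if $2n<r<3n$. Orthonormal VP wavelets: $\tilde\psi_{n,k}^m=\sum_{r=n}^{3n-1}\sigma_{r,k}^n\tilde q_{n,r}^m/\sqrt{v_{n,r}^m}$, $k=1,\ldots,2n$, an orthonormal basis of $\mathcal{W}_n^m$. *)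

theory Defs
  imports Complex_Main
begin

text \<open>Orthonormal Chebyshev polynomials w.r.t. w(x) = (1-x^2)^(-1/2) on [-1,1].\<close>
definition cheb_p :: "nat \<Rightarrow> real \<Rightarrow> real" where
  "cheb_p r x = (if r = 0 then sqrt (1 / pi) else sqrt (2 / pi) * cos (real r * arccos x))"

definition cheb_node :: "nat \<Rightarrow> nat \<Rightarrow> real" where
  "cheb_node N k = cos ((2 * real k - 1) * pi / (2 * real N))"

text \<open>Y_n = {x_k^{3n}} minus {x_k^n}, enumerated increasingly as y_1^n, ..., y_{2n}^n.\<close>
definition Yset :: "nat \<Rightarrow> real set" where
  "Yset n = (cheb_node (3 * n) ` {1..3 * n}) - (cheb_node n ` {1..n})"

definition ynode :: "nat \<Rightarrow> nat \<Rightarrow> real" where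
  "ynode n k = sorted_list_of_set (Yset n) ! (k - 1)"

definition mu :: "nat \<Rightarrow> nat \<Rightarrow> nat \<Rightarrow> real" where
  "mu N m r = (if r \<le> N - m then 1
     else if r < N + m then (real m + real N - real r) / (2 * real m) else 0)"

definition qV :: "nat \<Rightarrow> nat \<Rightarrow> nat \<Rightarrow> real \<Rightarrow> real" where
  "qV N m r x = (if r \<le> N - m then cheb_p r x
     else mu N m r * cheb_p r x - mu N m (2 * N - r) * cheb_p (2 * N - r) x)"

definition nu :: "nat \<Rightarrow> nat \<Rightarrow> nat \<Rightarrow> real" where
  "nu N m r = (if r \<le> N - m then 1
     else (real m ^ 2 + (real N - real r) ^ 2) / (2 * real m ^ 2))"

definition tau :: "nat \<Rightarrow> nat \<Rightarrow> nat \<Rightarrow> nat \<Rightarrow> real" where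
  "tau N m r k = sqrt (pi / (real N * nu N m r)) * cheb_p r (cheb_node N k)"

definition phiV :: "nat \<Rightarrow> nat \<Rightarrow> nat \<Rightarrow> real \<Rightarrow> real" where
  "phiV N m k x = (\<Sum>r<N. tau N m r k * qV N m r x)"

definition qW :: "nat \<Rightarrow> nat \<Rightarrow> nat \<Rightarrow> real \<Rightarrow> real" where
  "qW n m r x = (if n \<le> r \<and> r < n + m then mu n m r * cheb_p (2 * n - r) x + mu n m (2 * n - r) * cheb_p r x
     else if n + m \<le> r \<and> r \<le> 3 * n - m then cheb_p r x
     else qV (3 * n) m r x)"

definition vW :: "nat \<Rightarrow> nat \<Rightarrow> nat \<Rightarrow> real" where
  "vW n m r = (if n < r \<and> r < n + m then (real m ^ 2 + (real n - real r) ^ 2) / (2 * real m ^ 2)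
     else if r = n \<or> (n + m \<le> r \<and> r \<le> 3 * n - m) then 1
     else (real m ^ 2 + (3 * real n - real r) ^ 2) / (2 * real m ^ 2))"

definition cW :: "nat \<Rightarrow> nat \<Rightarrow> nat \<Rightarrow> real" where
  "cW n r k = (let y = ynode n k in
     if r = n then cheb_p n y
     else if n < r \<and> r < 2 * n then (cheb_p r y + cheb_p (2 * n - r) y) / sqrt 2
     else if r = 2 * n then (cheb_p (2 * n) y + sqrt 2 * cheb_p 0 y) / sqrt 3
     else sqrt (3 / 2) * cheb_p r y)"

definition sigma :: "nat \<Rightarrow> nat \<Rightarrow> nat \<Rightarrow> real" where
  "sigma n r k = sqrt (pi / (3 * real n)) * cW n r k"

definition psiW :: "nat \<Rightarrow> nat \<Rightarrow> nat \<Rightarrow> real \<Rightarrow> real" where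
  "psiW n m k x = (\<Sum>r = n..<3 * n. sigma n r k * qW n m r x / sqrt (vW n m r))"

text \<open>Decomposition matrices A (n x 3n) and B (2n x 3n), indices starting at 1.\<close>
definition matA :: "nat \<Rightarrow> nat \<Rightarrow> nat \<Rightarrow> nat \<Rightarrow> real" where
  "matA n m k j =
     (\<Sum>s = 0..n - m. tau n m s k * tau (3 * n) m s j)
   + (\<Sum>s = n - m + 1..n - 1. tau n m s k *
        (mu n m s * tau (3 * n) m s j - mu n m (2 * n - s) * tau (3 * n) m (2 * n - s) j))"

definition matB :: "nat \<Rightarrow> nat \<Rightarrow> nat \<Rightarrow> nat \<Rightarrow> real" where
  "matB n m h j =
     (\<Sum>r = n..n + m - 1. sigma n r h / sqrt (vW n m r) *
        (mu n m r * tau (3 * n) m (2 * n - r) j + mu n m (2 * n - r) * tau (3 * n) m r j))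
   + (\<Sum>r = n + m..3 * n - m. sigma n r h / sqrt (vW n m r) * tau (3 * n) m r j)
   + (\<Sum>r = 3 * n - m + 1..3 * n - 1. sigma n r h * sqrt (vW n m r) * tau (3 * n) m r j)"

end

theory Submission
  imports Defs
begin


definition th :: "nat \<Rightarrow> nat \<Rightarrow> real" where
  "th N k = (2 * real k - 1) * pi / (2 * real N)"

lemma th_bounds: assumes "1 \<le> k" "k \<le> N" shows "0 \<le> th N k" "th N k \<le> pi"
proof -
  have N: "real N > 0" using assms by simp
  have "2 * real k - 1 \<ge> 0" using assms by simp
  then show "0 \<le> th N k" unfolding th_def using N by simp
  have "2 * real k - 1 \<le> 2 * real N" using assms by simp
  then have "(2 * real k - 1) * pi \<le> 2 * real N * pi" by (simp add: mult_right_mono)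
  then show "th N k \<le> pi" unfolding th_def using N by (simp add: divide_le_eq mult.commute)
qed

lemma cheb_node_th: "cheb_node N k = cos (th N k)"
  unfolding cheb_node_def th_def by simp

lemma cheb_p_node: assumes "1 \<le> k" "k \<le> N"
  shows "cheb_p r (cheb_node N k) = (if r = 0 then sqrt (1/pi) else sqrt (2/pi) * cos (real r * th N k))"
  using th_bounds[OF assms] unfolding cheb_p_def cheb_node_th by (simp add: arccos_cos)

lemma tele_row: "2 * sin (x/2) * (\<Sum>r=1..M. cos (real r * x)) = sin ((real M + 1/2) * x) - sin (x/2)"
proof (induction M)
  case 0 then show ?case by simp
next
  case (Suc M)
  have "2 * sin (x/2) * cos (real (Suc M) * x) = sin ((real (Suc M) + 1/2) * x) - sin ((real M + 1/2) * x)"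
  proof -
    have e: "sin (x/2) * cos (real (Suc M) * x) = (sin (x/2 + real (Suc M) * x) + sin (x/2 - real (Suc M) * x)) / 2"
      by (rule sin_times_cos)
    have a: "x/2 + real (Suc M) * x = (real (Suc M) + 1/2) * x" by (simp add: algebra_simps)
    have b: "x/2 - real (Suc M) * x = - ((real M + 1/2) * x)" by (simp add: algebra_simps)
    show ?thesis using e unfolding a b sin_minus by simp
  qed
  then show ?case using Suc by (simp add: algebra_simps)
qed

lemma tele_col: "2 * sin x * (\<Sum>k=1..K. cos ((2 * real k - 1) * x)) = sin (2 * real K * x)"
proof (induction K)
  case 0 then show ?case by simp
next
  case (Suc K)
  have "2 * sin x * cos ((2 * real (Suc K) - 1) * x) = sin (2 * real (Suc K) * x) - sin (2 * real K * x)"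
  proof -
    have e: "sin x * cos ((2 * real (Suc K) - 1) * x) = (sin (x + (2 * real (Suc K) - 1) * x) + sin (x - (2 * real (Suc K) - 1) * x)) / 2"
      by (rule sin_times_cos)
    have a: "x + (2 * real (Suc K) - 1) * x = 2 * real (Suc K) * x" by (simp add: algebra_simps)
    have b: "x - (2 * real (Suc K) - 1) * x = - (2 * real K * x)" by (simp add: algebra_simps)
    show ?thesis using e unfolding a b sin_minus by simp
  qed
  then show ?case using Suc by (simp add: algebra_simps)
qed




lemma row_sum: assumes "0 < j" "j < 2 * N"
  shows "(\<Sum>r=1..N-1. cos (real r * (real j * pi / real N))) = (if even j then -1 else 0)"
proof -
  define x where "x = real j * pi / real N"
  have N: "N \<ge> 1" using assms by simp
  have x2: "x/2 = real j * pi / (2 * real N)" unfolding x_def by simp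
  have sp: "sin (x/2) > 0" unfolding x2
  proof (rule sin_gt_zero)
    show "0 < real j * pi / (2 * real N)" using assms by simp
    have "real j < 2 * real N" using assms by linarith
    then have "real j * pi < 2 * real N * pi" by simp
    then show "real j * pi / (2 * real N) < pi" using N by (simp add: divide_less_eq mult.commute)
  qed
  have m: "(real (N - 1) + 1/2) * x = real j * pi - x/2"
    unfolding x_def using N by (simp add: of_nat_diff field_simps)
  have s: "sin (real j * pi - x/2) = - ((-1)^j) * sin (x/2)"
    by (simp add: sin_diff)
  have "2 * sin (x/2) * (\<Sum>r=1..N-1. cos (real r * x)) = - ((-1)^j) * sin (x/2) - sin (x/2)"
    using tele_row[of x "N-1"] unfolding m s .
  then have "sin (x/2) * (1 + 2 * (\<Sum>r=1..N-1. cos (real r * x))) = sin (x/2) * (- ((-1)^j))"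
    by (simp add: algebra_simps)
  then have "1 + 2 * (\<Sum>r=1..N-1. cos (real r * x)) = - ((-1)^j)"
    using sp by (metis less_irrefl mult_left_cancel)
  then have "(\<Sum>r=1..N-1. cos (real r * x)) = (- ((-1)^j) - 1) / 2"
    by simp
  then show ?thesis unfolding x_def by auto
qed

lemma col_sum: assumes "0 < j" "j < 2 * K"
  shows "(\<Sum>k=1..K. cos (real j * th K k)) = 0"
proof -
  define x where "x = real j * pi / (2 * real K)"
  have K: "K \<ge> 1" using assms by simp
  have sp: "sin x > 0" unfolding x_def
  proof (rule sin_gt_zero)
    show "0 < real j * pi / (2 * real K)" using assms by simp
    have "real j < 2 * real K" using assms by linarith
    then have "real j * pi < 2 * real K * pi" by simp
    then show "real j * pi / (2 * real K) < pi" using K by (simp add: divide_less_eq mult.commute)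
  qed
  have e: "\<And>k. real j * th K k = (2 * real k - 1) * x" unfolding x_def th_def by simp
  have m: "2 * real K * x = real j * pi" unfolding x_def using K by simp
  have "2 * sin x * (\<Sum>k=1..K. cos ((2 * real k - 1) * x)) = 0"
    using tele_col[of x K] unfolding m by simp
  then show ?thesis using sp unfolding e by simp
qed




lemma cos_absdiff: "cos (real a * x - real b * x) = cos (real (if b \<le> a then a - b else b - a) * x)"
proof (cases "b \<le> a")
  case True then show ?thesis by (simp add: of_nat_diff algebra_simps)
next
  case False
  then have "real a * x - real b * x = - (real (b - a) * x)" by (simp add: of_nat_diff algebra_simps)
  then show ?thesis using False by simp
qed

lemma row_orth: assumes "1 \<le> k" "k \<le> N" "1 \<le> l" "l \<le> N"
  shows "pi / real N * (\<Sum>s<N. cheb_p s (cheb_node N k) * cheb_p s (cheb_node N l)) = (if k = l then 1 else 0)"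
proof -
  have N: "N \<ge> 1" using assms by simp
  define j1 where "j1 = (if l \<le> k then k - l else l - k)"
  define j2 where "j2 = k + l - 1"
  have prod: "cos (real s * th N k) * cos (real s * th N l)
      = (cos (real s * (real j1 * pi / real N)) + cos (real s * (real j2 * pi / real N))) / 2" for s
  proof -
    have "cos (real s * th N k) * cos (real s * th N l)
        = (cos (real s * th N k - real s * th N l) + cos (real s * th N k + real s * th N l)) / 2"
      by (rule cos_times_cos)
    moreover have "cos (real s * th N k - real s * th N l) = cos (real s * (real j1 * pi / real N))"
    proof -
      have "real s * th N k - real s * th N l = real k * (real s * pi / real N) - real l * (real s * pi / real N)"
        unfolding th_def using N by (simp add: field_simps)
      then have "cos (real s * th N k - real s * th N l) = cos (real j1 * (real s * pi / real N))"
        using cos_absdiff[of k "real s * pi / real N" l] unfolding j1_def by simp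
      then show ?thesis by (simp add: mult.commute mult.left_commute)
    qed
    moreover have "real s * th N k + real s * th N l = real s * (real j2 * pi / real N)"
      unfolding th_def j2_def using assms by (simp add: of_nat_diff field_simps)
    ultimately show ?thesis by simp
  qed
  have split: "(\<Sum>s<N. cheb_p s (cheb_node N k) * cheb_p s (cheb_node N l))
      = 1/pi + (\<Sum>s=1..N-1. cheb_p s (cheb_node N k) * cheb_p s (cheb_node N l))"
  proof -
    have "{..<N} = insert 0 {1..N-1}" using N by auto
    then show ?thesis using cheb_p_node[OF assms(1,2)] cheb_p_node[OF assms(3,4)]
      by (simp add: real_sqrt_mult[symmetric])
  qed
  have terms: "(\<Sum>s=1..N-1. cheb_p s (cheb_node N k) * cheb_p s (cheb_node N l))
      = (1/pi) * ((\<Sum>s=1..N-1. cos (real s * (real j1 * pi / real N))) + (\<Sum>s=1..N-1. cos (real s * (real j2 * pi / real N))))"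
  proof -
    have "(\<Sum>s=1..N-1. cheb_p s (cheb_node N k) * cheb_p s (cheb_node N l))
       = (\<Sum>s=1..N-1. (2/pi) * (cos (real s * th N k) * cos (real s * th N l)))"
      using cheb_p_node[OF assms(1,2)] cheb_p_node[OF assms(3,4)]
      by (intro sum.cong) (auto simp: real_sqrt_divide field_simps)
    also have "\<dots> = (\<Sum>s=1..N-1. (1/pi) * (cos (real s * (real j1 * pi / real N)) + cos (real s * (real j2 * pi / real N))))"
      unfolding prod by (intro sum.cong) (auto simp: field_simps)
    also have "\<dots> = (1/pi) * ((\<Sum>s=1..N-1. cos (real s * (real j1 * pi / real N))) + (\<Sum>s=1..N-1. cos (real s * (real j2 * pi / real N))))" by (simp only: sum_distrib_left[symmetric] sum.distrib)
    finally show ?thesis .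
  qed
  have j2: "0 < j2" "j2 < 2 * N" unfolding j2_def using assms by auto
  show ?thesis
  proof (cases "k = l")
    case True
    then have "j1 = 0" "odd j2" unfolding j1_def j2_def using assms by auto
    then show ?thesis unfolding split terms row_sum[OF j2] using N True by (simp add: field_simps of_nat_diff)
  next
    case False
    have j1: "0 < j1" "j1 < 2 * N" unfolding j1_def using assms False by auto
    have "odd (j1 + j2)"
    proof (cases "l \<le> k")
      case True
      then have "j1 + j2 = 2 * k - 1" unfolding j1_def j2_def using assms by auto
      then show ?thesis using assms by auto
    next
      case False
      then have "j1 + j2 = 2 * l - 1" unfolding j1_def j2_def using assms by auto
      then show ?thesis using assms by auto
    qed
    then have "(if even j1 then -1 else 0) + (if even j2 then -1 else 0) = (-1::real)" by auto
    then show ?thesis unfolding split terms row_sum[OF j1] row_sum[OF j2] using False by simp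
  qed
qed




definition dip :: "nat \<Rightarrow> (real \<Rightarrow> real) \<Rightarrow> (real \<Rightarrow> real) \<Rightarrow> real" where
  "dip K F G = pi / real K * (\<Sum>k=1..K. F (cheb_node K k) * G (cheb_node K k))"

lemma dip_cong: "(\<And>k. k \<in> {1..K} \<Longrightarrow> F (cheb_node K k) * G (cheb_node K k) = H k) \<Longrightarrow> dip K F G = pi / real K * (\<Sum>k=1..K. H k)"
  unfolding dip_def by (metis (no_types, lifting) sum.cong)

lemma col_orth: assumes "a < K" "b < K"
  shows "dip K (cheb_p a) (cheb_p b) = (if a = b then 1 else 0)"
proof -
  have K: "K \<ge> 1" using assms by simp
  have cp: "\<And>r k. k \<in> {1..K} \<Longrightarrow> cheb_p r (cheb_node K k) = (if r = 0 then sqrt (1/pi) else sqrt (2/pi) * cos (real r * th K k))"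
    using cheb_p_node by auto
  consider "a = 0" "b = 0" | "a = 0" "b > 0" | "a > 0" "b = 0" | "a > 0" "b > 0" by auto
  then show ?thesis
  proof cases
    case 1
    then have "dip K (cheb_p a) (cheb_p b) = pi / real K * (\<Sum>k=1..K. 1/pi)"
      by (intro dip_cong) (auto simp: cp real_sqrt_mult[symmetric])
    then show ?thesis using 1 K by simp
  next
    case 2
    then have "dip K (cheb_p a) (cheb_p b) = pi / real K * (\<Sum>k=1..K. sqrt (1/pi) * sqrt (2/pi) * cos (real b * th K k))"
      by (intro dip_cong) (simp add: cp mult.assoc)
    then show ?thesis using 2 col_sum[of b K] assms by (simp only: sum_distrib_left[symmetric]) simp
  next
    case 3
    then have "dip K (cheb_p a) (cheb_p b) = pi / real K * (\<Sum>k=1..K. sqrt (1/pi) * sqrt (2/pi) * cos (real a * th K k))"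
      by (intro dip_cong) (simp add: cp mult.assoc)
    then show ?thesis using 3 col_sum[of a K] assms by (simp only: sum_distrib_left[symmetric]) simp
  next
    case 4
    have ab4: "a \<noteq> 0" "b \<noteq> 0" using 4 by auto
    define j1 where "j1 = (if b \<le> a then a - b else b - a)"
    have pr: "cos (real a * th K k) * cos (real b * th K k) = (cos (real j1 * th K k) + cos (real (a + b) * th K k)) / 2" for k
    proof -
      have "cos (real a * th K k) * cos (real b * th K k) = (cos (real a * th K k - real b * th K k) + cos (real a * th K k + real b * th K k)) / 2"
        by (rule cos_times_cos)
      then show ?thesis unfolding cos_absdiff j1_def[symmetric] by (simp add: algebra_simps)
    qed
    have t: "sqrt (2/pi) * x * (sqrt (2/pi) * y) = 2/pi * (x*y)" for x y
    proof -
      have "sqrt (2/pi) * x * (sqrt (2/pi) * y) = (sqrt (2/pi) * sqrt (2/pi)) * (x*y)" by (simp only: ac_simps)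
      then show ?thesis by simp
    qed
    have "dip K (cheb_p a) (cheb_p b) = pi / real K * (\<Sum>k=1..K. (1/pi) * (cos (real j1 * th K k) + cos (real (a + b) * th K k)))"
      by (intro dip_cong) (simp add: cp ab4 t pr of_nat_add[symmetric] add_divide_distrib del: of_nat_add)
    also have "\<dots> = 1 / real K * ((\<Sum>k=1..K. cos (real j1 * th K k)) + (\<Sum>k=1..K. cos (real (a + b) * th K k)))"
      by (simp only: sum_distrib_left[symmetric] sum.distrib) simp
    finally have e: "dip K (cheb_p a) (cheb_p b) = 1 / real K * ((\<Sum>k=1..K. cos (real j1 * th K k)) + (\<Sum>k=1..K. cos (real (a + b) * th K k)))" .
    have ab: "(\<Sum>k=1..K. cos (real (a + b) * th K k)) = 0" using col_sum[of "a+b" K] 4 assms by simp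
    show ?thesis
    proof (cases "a = b")
      case True
      then have "j1 = 0" unfolding j1_def by simp
      then show ?thesis using e ab True K by simp
    next
      case False
      then have "(\<Sum>k=1..K. cos (real j1 * th K k)) = 0" using col_sum[of j1 K] assms unfolding j1_def by auto
      then show ?thesis using e ab False by simp
    qed
  qed
qed




lemma dip_sums: "dip K (\<lambda>x. \<Sum>i\<in>I. c i * F i x) (\<lambda>x. \<Sum>j\<in>J. d j * G j x)
   = (\<Sum>i\<in>I. \<Sum>j\<in>J. c i * d j * dip K (F i) (G j))"
proof -
  have "dip K (\<lambda>x. \<Sum>i\<in>I. c i * F i x) (\<lambda>x. \<Sum>j\<in>J. d j * G j x)
     = pi / real K * (\<Sum>k=1..K. \<Sum>i\<in>I. \<Sum>j\<in>J. (c i * F i (cheb_node K k)) * (d j * G j (cheb_node K k)))"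
    unfolding dip_def by (simp only: sum_product)
  also have "\<dots> = pi / real K * (\<Sum>i\<in>I. \<Sum>j\<in>J. \<Sum>k=1..K. (c i * F i (cheb_node K k)) * (d j * G j (cheb_node K k)))"
    by (subst sum.swap, intro arg_cong2[where f="(*)"] refl sum.cong, rule sum.swap)
  also have "\<dots> = (\<Sum>i\<in>I. \<Sum>j\<in>J. c i * d j * dip K (F i) (G j))"
    unfolding dip_def sum_distrib_left
    by (intro sum.cong refl) (simp add: mult_ac)
  finally show ?thesis .
qed

definition two :: "real \<Rightarrow> nat \<Rightarrow> real \<Rightarrow> nat \<Rightarrow> real \<Rightarrow> real" where
  "two a i b j = (\<lambda>x. a * cheb_p i x + b * cheb_p j x)"

lemma dip_two: assumes "i < K" "j < K" "i' < K" "j' < K"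
  shows "dip K (two a i b j) (two c i' d j') =
    a * c * (if i = i' then 1 else 0) + a * d * (if i = j' then 1 else 0)
    + b * c * (if j = i' then 1 else 0) + b * d * (if j = j' then 1 else 0)"
proof -
  have "dip K (two a i b j) (two c i' d j') =
     a * c * dip K (cheb_p i) (cheb_p i') + a * d * dip K (cheb_p i) (cheb_p j')
    + b * c * dip K (cheb_p j) (cheb_p i') + b * d * dip K (cheb_p j) (cheb_p j')"
    unfolding dip_def two_def by (simp add: algebra_simps sum.distrib sum_distrib_left)
  then show ?thesis using assms by (simp add: col_orth)
qed

lemma qV_two: "qV N m r = two (if r \<le> N - m then 1 else mu N m r) r (if r \<le> N - m then 0 else - mu N m (2 * N - r)) (if r \<le> N - m then r else 2 * N - r)"
  unfolding two_def qV_def by (rule ext) auto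

lemma nu_pos: "0 < m \<Longrightarrow> 0 < nu N m r"
  unfolding nu_def by (auto intro!: divide_pos_pos add_pos_nonneg)

lemma mu_sq: assumes "0 < m" "m < N" "N - m < r" "r < N"
  shows "mu N m r ^ 2 + mu N m (2 * N - r) ^ 2 = nu N m r"
proof -
  have a: "mu N m r = (real m + real N - real r) / (2 * real m)" unfolding mu_def using assms by auto
  have b: "mu N m (2 * N - r) = (real m - real N + real r) / (2 * real m)" unfolding mu_def using assms
    by (auto simp: of_nat_diff)
  have c: "nu N m r = (real m ^ 2 + (real N - real r) ^ 2) / (2 * real m ^ 2)" unfolding nu_def using assms by auto
  show ?thesis unfolding a b c using assms by (simp add: field_simps power2_eq_square)
qed

lemma G1: assumes "0 < m" "m < N" "N + m \<le> K" "r < N" "r' < N"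
  shows "dip K (qV N m r) (qV N m r') = (if r = r' then nu N m r else 0)"
proof -
  have idx: "r < K" "r' < K" "(if r \<le> N - m then r else 2 * N - r) < K" "(if r' \<le> N - m then r' else 2 * N - r') < K" using assms by auto
  have e: "dip K (qV N m r) (qV N m r') =
    (if r \<le> N - m then 1 else mu N m r) * (if r' \<le> N - m then 1 else mu N m r') * (if r = r' then 1 else 0)
  + (if r \<le> N - m then 1 else mu N m r) * (if r' \<le> N - m then 0 else - mu N m (2 * N - r')) * (if r = (if r' \<le> N - m then r' else 2 * N - r') then 1 else 0)
  + (if r \<le> N - m then 0 else - mu N m (2 * N - r)) * (if r' \<le> N - m then 1 else mu N m r') * (if (if r \<le> N - m then r else 2 * N - r) = r' then 1 else 0)
  + (if r \<le> N - m then 0 else - mu N m (2 * N - r)) * (if r' \<le> N - m then 0 else - mu N m (2 * N - r')) * (if (if r \<le> N - m then r else 2 * N - r) = (if r' \<le> N - m then r' else 2 * N - r') then 1 else 0)"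
    unfolding qV_two by (rule dip_two[OF idx(1,3,2,4)])
  show ?thesis
  proof (cases "r = r'")
    case True
    show ?thesis
    proof (cases "r \<le> N - m")
      case True then show ?thesis unfolding e using \<open>r = r'\<close> by (simp add: nu_def)
    next
      case False
      then have "mu N m r ^ 2 + mu N m (2 * N - r) ^ 2 = nu N m r" using mu_sq assms by auto
      moreover have "2 * N - r \<noteq> r" using assms by auto
      ultimately show ?thesis unfolding e using \<open>r = r'\<close> False
        by (simp add: power2_eq_square)
    qed
  next
    case False
    then show ?thesis unfolding e using assms by auto
  qed
qed




lemma mu_nn: "0 < m \<Longrightarrow> m < n \<Longrightarrow> mu n m n = 1/2"
  unfolding mu_def by auto

lemma qW_lo: "n \<le> r \<Longrightarrow> r < n + m \<Longrightarrow> qW n m r = two (mu n m r) (2 * n - r) (mu n m (2 * n - r)) r"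
  unfolding qW_def two_def by (rule ext) simp

lemma qW_mid: "n + m \<le> r \<Longrightarrow> r \<le> 3 * n - m \<Longrightarrow> qW n m r = two 1 r 0 r"
  unfolding qW_def two_def by (rule ext) simp

lemma qW_hi: "3 * n - m < r \<Longrightarrow> r < 3 * n \<Longrightarrow> 0 < m \<Longrightarrow> m < n \<Longrightarrow> qW n m r = two (mu (3 * n) m r) r (- mu (3 * n) m (6 * n - r)) (6 * n - r)"
  unfolding qW_def two_def qV_def by (rule ext) auto

lemma qV_lo: "r \<le> N - m \<Longrightarrow> qV N m r = two 1 r 0 r"
  unfolding qV_def two_def by (rule ext) simp

lemma qV_hi: "\<not> r \<le> N - m \<Longrightarrow> qV N m r = two (mu N m r) r (- mu N m (2 * N - r)) (2 * N - r)"
  unfolding qV_def two_def by (rule ext) simp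

lemma G3: assumes "0 < m" "m < n" "3 * n + m \<le> K" "n \<le> r" "r < 3 * n" "s < n"
  shows "dip K (qW n m r) (qV n m s) = 0"
proof -
  consider "r < n + m" | "n + m \<le> r" "r \<le> 3 * n - m" | "3 * n - m < r" by linarith
  then show ?thesis
  proof cases
    case 1
    show ?thesis
    proof (cases "s \<le> n - m")
      case True
      then show ?thesis unfolding qW_lo[OF assms(4) 1] qV_lo[OF True]
        using assms 1 by (subst dip_two) auto
    next
      case False
      then show ?thesis unfolding qW_lo[OF assms(4) 1] qV_hi[OF False]
        using assms 1 by (subst dip_two) auto
    qed
  next
    case 2
    show ?thesis
    proof (cases "s \<le> n - m")
      case True
      then show ?thesis unfolding qW_mid[OF 2] qV_lo[OF True]
        using assms 2 by (subst dip_two) auto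
    next
      case False
      then show ?thesis unfolding qW_mid[OF 2] qV_hi[OF False]
        using assms 2 by (subst dip_two) auto
    qed
  next
    case 3
    show ?thesis
    proof (cases "s \<le> n - m")
      case True
      then show ?thesis unfolding qW_hi[OF 3 assms(5,1,2)] qV_lo[OF True]
        using assms 3 by (subst dip_two) auto
    next
      case False
      then show ?thesis unfolding qW_hi[OF 3 assms(5,1,2)] qV_hi[OF False]
        using assms 3 by (subst dip_two) auto
    qed
  qed
qed




lemma vW_pos: "0 < m \<Longrightarrow> 0 < vW n m r"
  unfolding vW_def by (auto intro!: divide_pos_pos add_pos_nonneg)

lemma G2_diag: assumes "0 < m" "m < n" "3 * n + m \<le> K" "n \<le> r" "r < 3 * n"
  shows "dip K (qW n m r) (qW n m r) = vW n m r"
proof -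
  consider "r = n" | "n < r" "r < n + m" | "n + m \<le> r" "r \<le> 3 * n - m" | "3 * n - m < r" using assms by linarith
  then show ?thesis
  proof cases
    case 1
    then have l: "n \<le> r" "r < n + m" using assms by auto
    have h: "mu n m n = 1/2" using mu_nn[of m n] assms by simp
    show ?thesis unfolding qW_lo[OF l] using assms
      by (subst dip_two) (auto simp: vW_def h 1)
  next
    case 2
    then have l: "n \<le> r" "r < n + m" using assms by auto
    have "mu n m (2 * n - r) ^ 2 + mu n m (2 * n - (2 * n - r)) ^ 2 = nu n m (2 * n - r)"
      using mu_sq[of m n "2 * n - r"] assms 2 by auto
    moreover have "2 * n - (2 * n - r) = r" using 2 assms by auto
    moreover have "nu n m (2 * n - r) = vW n m r"
      unfolding nu_def vW_def using 2 assms by (auto simp: of_nat_diff power2_eq_square algebra_simps)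
    moreover have "2 * n - r \<noteq> r" using 2 by auto
    ultimately show ?thesis unfolding qW_lo[OF l] using assms 2
      by (subst dip_two) (auto simp: power2_eq_square)
  next
    case 3
    then show ?thesis unfolding qW_mid[OF 3] using assms 
      by (subst dip_two) (auto simp: vW_def)
  next
    case 4
    have "mu (3 * n) m r ^ 2 + mu (3 * n) m (2 * (3 * n) - r) ^ 2 = nu (3 * n) m r"
      using mu_sq[of m "3 * n" r] assms 4 by auto
    moreover have "nu (3 * n) m r = vW n m r"
      unfolding nu_def vW_def using 4 assms by auto
    moreover have "6 * n - r \<noteq> r" using 4 assms by auto
    moreover have "2 * (3 * n) = 6 * n" by simp
    ultimately show ?thesis unfolding qW_hi[OF 4 assms(5,1,2)] using assms 4
      by (subst dip_two) (auto simp: power2_eq_square)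
  qed
qed

lemma G2_off: assumes "0 < m" "m < n" "3 * n + m \<le> K" "n \<le> r" "r < 3 * n" "n \<le> r'" "r' < 3 * n" "r \<noteq> r'"
  shows "dip K (qW n m r) (qW n m r') = 0"
proof -
  consider "r < n + m" | "n + m \<le> r" "r \<le> 3 * n - m" | "3 * n - m < r" by linarith
  note c1 = this
  consider "r' < n + m" | "n + m \<le> r'" "r' \<le> 3 * n - m" | "3 * n - m < r'" by linarith
  note c2 = this
  show ?thesis
  proof (cases rule: c1)
    case 1
    note q1 = qW_lo[OF assms(4) 1]
    show ?thesis
    proof (cases rule: c2)
      case 1 then show ?thesis unfolding q1 qW_lo[OF assms(6) 1] using assms \<open>r < n + m\<close> by (subst dip_two) auto
    next
      case 2 then show ?thesis unfolding q1 qW_mid[OF 2] using assms \<open>r < n + m\<close> by (subst dip_two) auto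
    next
      case 3 then show ?thesis unfolding q1 qW_hi[OF 3 assms(7,1,2)] using assms \<open>r < n + m\<close> by (subst dip_two) auto
    qed
  next
    case 2
    note q1 = qW_mid[OF 2]
    show ?thesis
    proof (cases rule: c2)
      case 1 then show ?thesis unfolding q1 qW_lo[OF assms(6) 1] using assms 2 by (subst dip_two) auto
    next
      case 2 then show ?thesis unfolding q1 qW_mid[OF 2] using assms by (subst dip_two) auto
    next
      case 3 then show ?thesis unfolding q1 qW_hi[OF 3 assms(7,1,2)] using assms 2 by (subst dip_two) auto
    qed
  next
    case 3
    note q1 = qW_hi[OF 3 assms(5,1,2)]
    show ?thesis
    proof (cases rule: c2)
      case 1 then show ?thesis unfolding q1 qW_lo[OF assms(6) 1] using assms 3 by (subst dip_two) auto
    next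
      case 2 then show ?thesis unfolding q1 qW_mid[OF 2] using assms 3 by (subst dip_two) auto
    next
      case 3 then show ?thesis unfolding q1 qW_hi[OF 3 assms(7,1,2)] using assms \<open>3 * n - m < r\<close> by (subst dip_two) auto
    qed
  qed
qed

lemma G2: assumes "0 < m" "m < n" "3 * n + m \<le> K" "n \<le> r" "r < 3 * n" "n \<le> r'" "r' < 3 * n"
  shows "dip K (qW n m r) (qW n m r') = (if r = r' then vW n m r else 0)"
  using G2_diag[OF assms(1-5)] G2_off[OF assms] by auto




lemma G4: assumes "0 < m" "m < n" "3 * n + m \<le> K" "s < n" "r < 3 * n"
  shows "dip K (qV n m s) (qV (3 * n) m r) = (if r = s then (if s \<le> n - m then 1 else mu n m s) else 0)
     + (if r = 2 * n - s \<and> \<not> s \<le> n - m then - mu n m (2 * n - s) else 0)"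
proof (cases "s \<le> n - m")
  case True
  note q1 = qV_lo[OF True]
  show ?thesis
  proof (cases "r \<le> 3 * n - m")
    case True then show ?thesis unfolding q1 qV_lo[OF True] using assms \<open>s \<le> n - m\<close> by (subst dip_two) auto
  next
    case False then show ?thesis unfolding q1 qV_hi[OF False] using assms \<open>s \<le> n - m\<close> by (subst dip_two) auto
  qed
next
  case False
  note q1 = qV_hi[OF False]
  show ?thesis
  proof (cases "r \<le> 3 * n - m")
    case True then show ?thesis unfolding q1 qV_lo[OF True] using assms \<open>\<not> s \<le> n - m\<close> by (subst dip_two) auto
  next
    case False then show ?thesis unfolding q1 qV_hi[OF False] using assms \<open>\<not> s \<le> n - m\<close> by (subst dip_two) auto
  qed
qed

lemma G5: assumes "0 < m" "m < n" "3 * n + m \<le> K" "n \<le> r" "r < 3 * n" "r' < 3 * n"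
  shows "dip K (qW n m r) (qV (3 * n) m r') =
    (if r < n + m then (if r' = 2 * n - r then mu n m r else 0) + (if r' = r then mu n m (2 * n - r) else 0)
     else if r \<le> 3 * n - m then (if r' = r then 1 else 0)
     else (if r' = r then vW n m r else 0))"
proof -
  consider "r < n + m" | "n + m \<le> r" "r \<le> 3 * n - m" | "3 * n - m < r" by linarith
  then show ?thesis
  proof cases
    case 1
    note q1 = qW_lo[OF assms(4) 1]
    show ?thesis
    proof (cases "r' \<le> 3 * n - m")
      case True then show ?thesis unfolding q1 qV_lo[OF True] using assms 1 by (subst dip_two) auto
    next
      case False then show ?thesis unfolding q1 qV_hi[OF False] using assms 1 by (subst dip_two) auto
    qed
  next
    case 2
    note q1 = qW_mid[OF 2]
    show ?thesis
    proof (cases "r' \<le> 3 * n - m")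
      case True then show ?thesis unfolding q1 qV_lo[OF True] using assms 2 by (subst dip_two) auto
    next
      case False then show ?thesis unfolding q1 qV_hi[OF False] using assms 2 by (subst dip_two) auto
    qed
  next
    case 3
    have "qW n m r = qV (3 * n) m r" unfolding qW_def using 3 assms by (intro ext) auto
    moreover have "nu (3 * n) m r = vW n m r"
      unfolding nu_def vW_def using 3 assms by auto
    ultimately show ?thesis using G1[of m "3 * n" K r r'] assms 3 by auto
  qed
qed




lemma phiV_eq: "phiV N m k = (\<lambda>x. \<Sum>r<N. tau N m r k * qV N m r x)"
  by (rule ext) (simp add: phiV_def)

lemma psiW_eq: "psiW n m h = (\<lambda>x. \<Sum>r\<in>{n..<3*n}. (sigma n r h / sqrt (vW n m r)) * qW n m r x)"
  by (rule ext) (simp add: psiW_def)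

lemma tau_sq: assumes "0 < m" "0 < N"
  shows "tau N m r k * tau N m r l * nu N m r = pi / real N * (cheb_p r (cheb_node N k) * cheb_p r (cheb_node N l))"
proof -
  have nu: "nu N m r > 0" using nu_pos assms by auto
  have "tau N m r k * tau N m r l * nu N m r = (sqrt (pi / (real N * nu N m r)) * sqrt (pi / (real N * nu N m r))) * nu N m r * (cheb_p r (cheb_node N k) * cheb_p r (cheb_node N l))"
    unfolding tau_def by (simp only: ac_simps)
  also have "\<dots> = pi / (real N * nu N m r) * nu N m r * (cheb_p r (cheb_node N k) * cheb_p r (cheb_node N l))"
    using nu assms by simp
  also have "\<dots> = pi / real N * (cheb_p r (cheb_node N k) * cheb_p r (cheb_node N l))"
    using nu by simp
  finally show ?thesis .
qed

lemma P1: assumes "0 < m" "m < N" "N + m \<le> K" "k \<in> {1..N}" "l \<in> {1..N}"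
  shows "dip K (phiV N m k) (phiV N m l) = (if k = l then 1 else 0)"
proof -
  have "dip K (phiV N m k) (phiV N m l) = (\<Sum>r<N. \<Sum>r'<N. tau N m r k * tau N m r' l * dip K (qV N m r) (qV N m r'))"
    unfolding phiV_eq by (rule dip_sums)
  also have "\<dots> = (\<Sum>r<N. \<Sum>r'<N. if r = r' then tau N m r k * tau N m r' l * nu N m r else 0)"
    using G1[OF assms(1-3)] by (intro sum.cong refl) auto
  also have "\<dots> = (\<Sum>r<N. tau N m r k * tau N m r l * nu N m r)"
    by simp
  also have "\<dots> = pi / real N * (\<Sum>r<N. cheb_p r (cheb_node N k) * cheb_p r (cheb_node N l))"
    using tau_sq[of m N] assms by (simp add: sum_distrib_left)
  also have "\<dots> = (if k = l then 1 else 0)"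
    using row_orth assms by auto
  finally show ?thesis .
qed

lemma P2: assumes "0 < m" "m < n" "3 * n + m \<le> K" "k \<in> {1..n}"
  shows "dip K (psiW n m h) (phiV n m k) = 0"
proof -
  have "dip K (psiW n m h) (phiV n m k) = (\<Sum>r\<in>{n..<3*n}. \<Sum>s<n. (sigma n r h / sqrt (vW n m r)) * tau n m s k * dip K (qW n m r) (qV n m s))"
    unfolding phiV_eq psiW_eq by (rule dip_sums)
  also have "\<dots> = 0"
    using G3[OF assms(1-3)] by (intro sum.neutral ballI) auto
  finally show ?thesis .
qed

lemma P3: assumes "0 < m" "m < n" "3 * n + m \<le> K"
  shows "dip K (psiW n m h) (psiW n m h') = (\<Sum>r\<in>{n..<3*n}. sigma n r h * sigma n r h')"
proof -
  have "dip K (psiW n m h) (psiW n m h') = (\<Sum>r\<in>{n..<3*n}. \<Sum>r'\<in>{n..<3*n}. (sigma n r h / sqrt (vW n m r)) * (sigma n r' h' / sqrt (vW n m r')) * dip K (qW n m r) (qW n m r'))"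
    unfolding psiW_eq by (rule dip_sums)
  also have "\<dots> = (\<Sum>r\<in>{n..<3*n}. \<Sum>r'\<in>{n..<3*n}. if r = r' then (sigma n r h / sqrt (vW n m r)) * (sigma n r' h' / sqrt (vW n m r')) * vW n m r else 0)"
    using G2[OF assms(1-3)] by (intro sum.cong refl) auto
  also have "\<dots> = (\<Sum>r\<in>{n..<3*n}. (sigma n r h / sqrt (vW n m r)) * (sigma n r h' / sqrt (vW n m r)) * vW n m r)"
    by simp
  also have "\<dots> = (\<Sum>r\<in>{n..<3*n}. sigma n r h * sigma n r h')"
  proof (intro sum.cong refl)
    fix r
    have v: "vW n m r > 0" using vW_pos assms by auto
    then have "sqrt (vW n m r) * sqrt (vW n m r) = vW n m r" by simp
    then show "(sigma n r h / sqrt (vW n m r)) * (sigma n r h' / sqrt (vW n m r)) * vW n m r = sigma n r h * sigma n r h'"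
      using v by (simp add: field_simps)
  qed
  finally show ?thesis .
qed




lemma P4: assumes "0 < m" "m < n" "3 * n + m \<le> K"
  shows "dip K (phiV n m k) (phiV (3 * n) m j) = matA n m k j"
proof -
  define E where "E s = tau n m s k * (if s \<le> n - m then tau (3 * n) m s j
        else mu n m s * tau (3 * n) m s j - mu n m (2 * n - s) * tau (3 * n) m (2 * n - s) j)" for s
  have "dip K (phiV n m k) (phiV (3 * n) m j) = (\<Sum>s<n. \<Sum>r<3*n. tau n m s k * tau (3 * n) m r j * dip K (qV n m s) (qV (3 * n) m r))"
    unfolding phiV_eq by (rule dip_sums)
  also have "\<dots> = (\<Sum>s<n. E s)"
  proof (intro sum.cong refl)
    fix s assume s: "s \<in> {..<n}"
    have "(\<Sum>r<3*n. tau n m s k * tau (3 * n) m r j * dip K (qV n m s) (qV (3 * n) m r))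
      = (\<Sum>r<3*n. (if r = s then tau n m s k * (if s \<le> n - m then 1 else mu n m s) * tau (3 * n) m r j else 0)
          + (if r = 2 * n - s then (if s \<le> n - m then 0 else - tau n m s k * mu n m (2 * n - s) * tau (3 * n) m r j) else 0))"
      using G4[OF assms] s by (intro sum.cong refl) (auto simp: algebra_simps)
    also have "\<dots> = tau n m s k * (if s \<le> n - m then 1 else mu n m s) * tau (3 * n) m s j
         + (if s \<le> n - m then 0 else - tau n m s k * mu n m (2 * n - s) * tau (3 * n) m (2 * n - s) j)"
    proof -
      have "2 * n - s < 3 * n" using assms by auto
      then show ?thesis using s assms by (simp add: sum.distrib)
    qed
    also have "\<dots> = E s" unfolding E_def by (simp add: algebra_simps)
    finally show "(\<Sum>r<3*n. tau n m s k * tau (3 * n) m r j * dip K (qV n m s) (qV (3 * n) m r)) = E s" .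
  qed
  also have "\<dots> = (\<Sum>s\<in>{0..<n - m + 1}. E s) + (\<Sum>s\<in>{n - m + 1..<n}. E s)"
    using sum.atLeastLessThan_concat[of 0 "n - m + 1" n E] assms by (simp add: atLeast0LessThan)
  also have "(\<Sum>s\<in>{0..<n - m + 1}. E s) = (\<Sum>s = 0..n - m. tau n m s k * tau (3 * n) m s j)"
    unfolding E_def by (simp add: atLeastLessThanSuc_atLeastAtMost)
  also have "(\<Sum>s\<in>{n - m + 1..<n}. E s) = (\<Sum>s = n - m + 1..n - 1. tau n m s k *
        (mu n m s * tau (3 * n) m s j - mu n m (2 * n - s) * tau (3 * n) m (2 * n - s) j))"
  proof -
    have "{n - m + 1..<n} = {n - m + 1..n - 1}" using assms by auto
    then show ?thesis unfolding E_def by (intro sum.cong) auto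
  qed
  finally show ?thesis unfolding matA_def .
qed




lemma P5: assumes "0 < m" "m < n" "3 * n + m \<le> K"
  shows "dip K (psiW n m h) (phiV (3 * n) m j) = matB n m h j"
proof -
  define E where "E r = sigma n r h / sqrt (vW n m r) * (if r < n + m then mu n m r * tau (3 * n) m (2 * n - r) j + mu n m (2 * n - r) * tau (3 * n) m r j
     else if r \<le> 3 * n - m then tau (3 * n) m r j else vW n m r * tau (3 * n) m r j)" for r
  have "dip K (psiW n m h) (phiV (3 * n) m j) = (\<Sum>r\<in>{n..<3*n}. \<Sum>r'<3*n. sigma n r h / sqrt (vW n m r) * tau (3 * n) m r' j * dip K (qW n m r) (qV (3 * n) m r'))"
    unfolding phiV_eq psiW_eq by (rule dip_sums)
  also have "\<dots> = (\<Sum>r\<in>{n..<3*n}. E r)"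
  proof (intro sum.cong refl)
    fix r assume r: "r \<in> {n..<3*n}"
    define c where "c = sigma n r h / sqrt (vW n m r)"
    have "(\<Sum>r'<3*n. c * tau (3 * n) m r' j * dip K (qW n m r) (qV (3 * n) m r'))
      = (\<Sum>r'<3*n. (if r < n + m then (if r' = 2 * n - r then c * mu n m r * tau (3 * n) m r' j else 0) + (if r' = r then c * mu n m (2 * n - r) * tau (3 * n) m r' j else 0)
     else if r \<le> 3 * n - m then (if r' = r then c * tau (3 * n) m r' j else 0)
     else (if r' = r then c * vW n m r * tau (3 * n) m r' j else 0)))"
      using G5[OF assms] r by (intro sum.cong refl) (auto simp: algebra_simps)
    also have "\<dots> = E r"
    proof -
      have "2 * n - r < 3 * n" "r < 3 * n" using assms r by auto
      then show ?thesis unfolding E_def c_def by (simp add: sum.distrib algebra_simps add_divide_distrib)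
    qed
    finally show "(\<Sum>r'<3*n. sigma n r h / sqrt (vW n m r) * tau (3 * n) m r' j * dip K (qW n m r) (qV (3 * n) m r')) = E r"
      unfolding c_def .
  qed
  also have "\<dots> = (\<Sum>r\<in>{n..<n+m}. E r) + (\<Sum>r\<in>{n+m..<3*n-m+1}. E r) + (\<Sum>r\<in>{3*n-m+1..<3*n}. E r)"
  proof -
    have c1: "sum E {n..<n+m} + sum E {n+m..<3*n-m+1} = sum E {n..<3*n-m+1}"
      by (rule sum.atLeastLessThan_concat) (use assms in auto)
    have c2: "sum E {n..<3*n-m+1} + sum E {3*n-m+1..<3*n} = sum E {n..<3*n}"
      by (rule sum.atLeastLessThan_concat) (use assms in auto)
    show ?thesis unfolding c2[symmetric] c1[symmetric] ..
  qed
  also have "(\<Sum>r\<in>{n..<n+m}. E r) = (\<Sum>r = n..n + m - 1. sigma n r h / sqrt (vW n m r) *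
        (mu n m r * tau (3 * n) m (2 * n - r) j + mu n m (2 * n - r) * tau (3 * n) m r j))"
  proof -
    have "{n..<n+m} = {n..n + m - 1}" using assms by auto
    then show ?thesis unfolding E_def by (intro sum.cong) auto
  qed
  also have "(\<Sum>r\<in>{n+m..<3*n-m+1}. E r) = (\<Sum>r = n + m..3 * n - m. sigma n r h / sqrt (vW n m r) * tau (3 * n) m r j)"
  proof -
    have "{n+m..<3*n-m+1} = {n + m..3 * n - m}" using assms by auto
    then show ?thesis unfolding E_def by (intro sum.cong) auto
  qed
  also have "(\<Sum>r\<in>{3*n-m+1..<3*n}. E r) = (\<Sum>r = 3 * n - m + 1..3 * n - 1. sigma n r h * sqrt (vW n m r) * tau (3 * n) m r j)"
  proof -
    have "{3*n-m+1..<3*n} = {3 * n - m + 1..3 * n - 1}" using assms by auto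
    moreover have "sigma n r h / sqrt (vW n m r) * (vW n m r * tau (3 * n) m r j) = sigma n r h * sqrt (vW n m r) * tau (3 * n) m r j" for r
    proof -
      have v: "vW n m r > 0" using vW_pos assms by auto
      have sv: "sqrt (vW n m r) > 0" using v by simp
      have e: "vW n m r = sqrt (vW n m r) * sqrt (vW n m r)" using v by simp
      show ?thesis using sv by (subst (2) e) (simp add: field_simps)
    qed
    ultimately show ?thesis unfolding E_def using assms by (intro sum.cong) auto
  qed
  finally show ?thesis unfolding matB_def .
qed




definition gfun :: "nat \<Rightarrow> nat \<Rightarrow> real \<Rightarrow> real" where
  "gfun n r x = (if r = n then cos (real n * x)
     else if n < r \<and> r < 2 * n then (cos (real r * x) + cos (real (2 * n - r) * x)) / sqrt 2
     else if r = 2 * n then (cos (real (2 * n) * x) + 1) / sqrt 3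
     else sqrt (3/2) * cos (real r * x))"

lemma split3: fixes n :: nat assumes "1 \<le> n"
  shows "sum F {n..<3*n} = F n + (\<Sum>t\<in>{1..<n}. F (n + t)) + F (2*n) + (\<Sum>t\<in>{1..<n}. F (2*n + t))"
proof -
  have a1: "sum F {n..<3*n} = sum F {n..<n+1} + sum F {n+1..<3*n}"
    using sum.atLeastLessThan_concat[of n "n+1" "3*n" F] assms by simp
  have a2: "sum F {n+1..<3*n} = sum F {n+1..<2*n} + sum F {2*n..<3*n}"
    using sum.atLeastLessThan_concat[of "n+1" "2*n" "3*n" F] assms by simp
  have a3: "sum F {2*n..<3*n} = sum F {2*n..<2*n+1} + sum F {2*n+1..<3*n}"
    using sum.atLeastLessThan_concat[of "2*n" "2*n+1" "3*n" F] assms by simp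
  have a: "sum F {n..<3*n} = sum F {n..<n+1} + sum F {n+1..<2*n}  + sum F {2*n..<2*n+1} + sum F {2*n+1..<3*n}"
    unfolding a1 a2 a3 by (simp add: add.assoc)
  have b: "sum F {n+1..<2*n} = (\<Sum>t\<in>{1..<n}. F (n + t))"
    using sum.shift_bounds_nat_ivl[of F 1 n n] by (simp add: add.commute mult_2)
  have c: "sum F {2*n+1..<3*n} = (\<Sum>t\<in>{1..<n}. F (2*n + t))"
    using sum.shift_bounds_nat_ivl[of F 1 "2*n" n] by (simp add: add.commute)
  show ?thesis unfolding a b c by simp
qed

lemma reflect: "(\<Sum>t\<in>{1..<n::nat}. f (n - t)) = (\<Sum>t\<in>{1..<n}. (f t :: real))"
  by (rule sum.reindex_bij_witness[where i="\<lambda>t. n - t" and j="\<lambda>t. n - t"]) auto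

lemma trigY: assumes n: "1 \<le> n" and c: "cos (real (2*n) * x) = 1/2" "cos (real (2*n) * y) = 1/2"
  shows "(\<Sum>r\<in>{n..<3*n}. gfun n r x * gfun n r y) = 1/2 + (\<Sum>s\<in>{1..<3*n}. cos (real s * x) * cos (real s * y))"
proof -
  define C where "C s = cos (real s * x)" for s
  define D where "D s = cos (real s * y)" for s
  define T where "T = {1..<n}"
  have Z: "cos (real (2*n + t) * z) = cos (real t * z) - cos (real (2*n - t) * z)" if "cos (real (2*n) * z) = 1/2" "t < n" for t z
  proof -
    define a where "a = real (2*n) * z"
    define b where "b = real t * z"
    have ca: "cos a = 1/2" using that(1) unfolding a_def .
    have "cos (a + b) + cos (a - b) = 2 * cos a * cos b"
      by (simp add: cos_add cos_diff)
    then have e: "cos (a + b) = cos b - cos (a - b)" unfolding ca by simp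
    moreover have "real (2*n + t) * z = a + b" unfolding a_def b_def by (simp add: algebra_simps)
    moreover have "real (2*n - t) * z = a - b" unfolding a_def b_def using that by (simp add: of_nat_diff algebra_simps)
    ultimately show ?thesis unfolding b_def by simp
  qed
  have g1: "gfun n (n + t) z = (cos (real (n + t) * z) + cos (real (n - t) * z)) / sqrt 2" if "t \<in> T" for t z
  proof -
    have "2 * n - (n + t) = n - t" by simp
    then show ?thesis unfolding gfun_def using that unfolding T_def by auto
  qed
  have g2: "gfun n (2 * n + t) z = sqrt (3/2) * cos (real (2 * n + t) * z)" if "t \<in> T" for t z
    unfolding gfun_def using that unfolding T_def by auto
  have g3: "gfun n (2 * n) z = (cos (real (2 * n) * z) + 1) / sqrt 3" for z
    unfolding gfun_def using n by auto
  have g4: "gfun n n z = cos (real n * z)" for z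
    unfolding gfun_def by auto
  have L: "(\<Sum>r\<in>{n..<3*n}. gfun n r x * gfun n r y) = C n * D n
      + (\<Sum>t\<in>T. (C (n + t) + C (n - t)) * (D (n + t) + D (n - t)) / 2) + 3/4
      + (\<Sum>t\<in>T. 3/2 * ((C t - C (2*n - t)) * (D t - D (2*n - t))))"
  proof -
    have "(\<Sum>r\<in>{n..<3*n}. gfun n r x * gfun n r y) = gfun n n x * gfun n n y + (\<Sum>t\<in>T. gfun n (n + t) x * gfun n (n + t) y)
       + gfun n (2*n) x * gfun n (2*n) y + (\<Sum>t\<in>T. gfun n (2*n + t) x * gfun n (2*n + t) y)"
      unfolding T_def by (rule split3[OF n])
    moreover have "(\<Sum>t\<in>T. gfun n (n + t) x * gfun n (n + t) y) = (\<Sum>t\<in>T. (C (n + t) + C (n - t)) * (D (n + t) + D (n - t)) / 2)"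
    proof (intro sum.cong refl)
      fix t assume t: "t \<in> T"
      have s2: "sqrt 2 * sqrt 2 = (2::real)" by simp
      have d: "a / sqrt 2 * (b / sqrt 2) = a * b / 2" for a b :: real
        by (metis s2 times_divide_times_eq)
      show "gfun n (n + t) x * gfun n (n + t) y = (C (n + t) + C (n - t)) * (D (n + t) + D (n - t)) / 2"
        unfolding g1[OF t] C_def D_def d ..
    qed
    moreover have "gfun n (2*n) x * gfun n (2*n) y = 3/4"
      unfolding g3 c by (simp add: field_simps)
    moreover have "(\<Sum>t\<in>T. gfun n (2*n + t) x * gfun n (2*n + t) y) = (\<Sum>t\<in>T. 3/2 * ((C t - C (2*n - t)) * (D t - D (2*n - t))))"
    proof (intro sum.cong refl)
      fix t assume t: "t \<in> T"
      have tn: "t < n" using t unfolding T_def by auto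
      have zx: "cos (real (2*n+t) * x) = C t - C (2*n-t)" unfolding C_def by (rule Z[OF c(1) tn])
      have zy: "cos (real (2*n+t) * y) = D t - D (2*n-t)" unfolding D_def by (rule Z[OF c(2) tn])
      have d: "sqrt (3/2) * a * (sqrt (3/2) * b) = 3/2 * (a * b)" for a b :: real
      proof -
        have "sqrt (3/2) * a * (sqrt (3/2) * b) = (sqrt (3/2) * sqrt (3/2)) * (a * b)" by (simp only: ac_simps)
        then show ?thesis by simp
      qed
      show "gfun n (2*n + t) x * gfun n (2*n + t) y = 3/2 * ((C t - C (2*n - t)) * (D t - D (2*n - t)))"
        unfolding g2[OF t] zx zy d ..
    qed
    ultimately show ?thesis unfolding g4 C_def D_def by simp
  qed
  have R: "1/2 + (\<Sum>s\<in>{1..<3*n}. cos (real s * x) * cos (real s * y)) = 1/2 + (\<Sum>t\<in>T. C t * D t) + C n * D n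
      + (\<Sum>t\<in>T. C (n + t) * D (n + t)) + 1/4 + (\<Sum>t\<in>T. (C t - C (2*n - t)) * (D t - D (2*n - t)))"
  proof -
    have "(\<Sum>s\<in>{1..<3*n}. C s * D s) = (\<Sum>s\<in>{1..<n}. C s * D s) + (\<Sum>s\<in>{n..<3*n}. C s * D s)"
      using n by (simp add: sum.atLeastLessThan_concat)
    also have "(\<Sum>s\<in>{n..<3*n}. C s * D s) = C n * D n + (\<Sum>t\<in>T. C (n + t) * D (n + t)) + C (2*n) * D (2*n) + (\<Sum>t\<in>T. C (2*n + t) * D (2*n + t))"
      unfolding T_def by (rule split3[OF n])
    also have "(\<Sum>t\<in>T. C (2*n + t) * D (2*n + t)) = (\<Sum>t\<in>T. (C t - C (2*n - t)) * (D t - D (2*n - t)))"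
      unfolding C_def D_def using Z[OF c(1)] Z[OF c(2)] by (intro sum.cong refl) (auto simp: T_def)
    also have "C (2*n) * D (2*n) = 1/4" unfolding C_def D_def c by simp
    finally show ?thesis unfolding C_def D_def T_def by simp
  qed
  have rf1: "(\<Sum>t\<in>T. C (2*n - t) * D (2*n - t)) = (\<Sum>t\<in>T. C (n + t) * D (n + t))"
  proof -
    have "(\<Sum>t\<in>T. C (2*n - t) * D (2*n - t)) = (\<Sum>t\<in>T. C (n + (n - t)) * D (n + (n - t)))"
      unfolding T_def by (intro sum.cong refl) (auto simp: mult_2)
    also have "\<dots> = (\<Sum>t\<in>T. C (n + t) * D (n + t))"
      unfolding T_def by (rule reflect[where f="\<lambda>t. C (n + t) * D (n + t)"])
    finally show ?thesis .
  qed
  have rf2: "(\<Sum>t\<in>T. C t * D t) = (\<Sum>t\<in>T. C (n - t) * D (n - t))"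
    unfolding T_def by (rule reflect[where f="\<lambda>t. C t * D t", symmetric])
  have rf3: "(\<Sum>t\<in>T. C t * D (2*n - t)) = (\<Sum>t\<in>T. C (n - t) * D (n + t))"
  proof -
    have "(\<Sum>t\<in>T. C (n - t) * D (n + t)) = (\<Sum>t\<in>T. C (n - (n - t)) * D (n + (n - t)))"
      unfolding T_def by (rule reflect[where f="\<lambda>t. C (n - t) * D (n + t)", symmetric])
    also have "\<dots> = (\<Sum>t\<in>T. C t * D (2*n - t))"
      unfolding T_def by (intro sum.cong refl) (auto simp: mult_2)
    finally show ?thesis by simp
  qed
  have rf4: "(\<Sum>t\<in>T. C (2*n - t) * D t) = (\<Sum>t\<in>T. C (n + t) * D (n - t))"
  proof -
    have "(\<Sum>t\<in>T. C (n + t) * D (n - t)) = (\<Sum>t\<in>T. C (n + (n - t)) * D (n - (n - t)))"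
      unfolding T_def by (rule reflect[where f="\<lambda>t. C (n + t) * D (n - t)", symmetric])
    also have "\<dots> = (\<Sum>t\<in>T. C (2*n - t) * D t)"
      unfolding T_def by (intro sum.cong refl) (auto simp: mult_2)
    finally show ?thesis by simp
  qed
  define S1 where "S1 = (\<Sum>t\<in>T. C (n + t) * D (n + t))"
  define S2 where "S2 = (\<Sum>t\<in>T. C (n - t) * D (n - t))"
  define S3 where "S3 = (\<Sum>t\<in>T. C (n - t) * D (n + t))"
  define S4 where "S4 = (\<Sum>t\<in>T. C (n + t) * D (n - t))"
  have e1: "(\<Sum>t\<in>T. (C (n + t) + C (n - t)) * (D (n + t) + D (n - t)) / 2) = (S1 + S2 + S3 + S4) / 2"
  proof -
    have "(\<Sum>t\<in>T. (C (n + t) + C (n - t)) * (D (n + t) + D (n - t)) / 2) = (\<Sum>t\<in>T. (C (n + t) + C (n - t)) * (D (n + t) + D (n - t))) / 2"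
      by (simp add: sum_divide_distrib)
    moreover have "(\<Sum>t\<in>T. (C (n + t) + C (n - t)) * (D (n + t) + D (n - t))) = S1 + S2 + S3 + S4"
      unfolding S1_def S2_def S3_def S4_def by (simp add: algebra_simps sum.distrib)
    ultimately show ?thesis by simp
  qed
  have e2: "(\<Sum>t\<in>T. (C t - C (2*n - t)) * (D t - D (2*n - t))) = S2 + S1 - S3 - S4"
  proof -
    have "(\<Sum>t\<in>T. (C t - C (2*n - t)) * (D t - D (2*n - t))) = (\<Sum>t\<in>T. C t * D t) + (\<Sum>t\<in>T. C (2*n - t) * D (2*n - t))
        - (\<Sum>t\<in>T. C t * D (2*n - t)) - (\<Sum>t\<in>T. C (2*n - t) * D t)"
      by (simp add: algebra_simps sum.distrib sum_subtractf)
    then show ?thesis unfolding rf1 rf2 rf3 rf4 S1_def S2_def S3_def S4_def by simp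
  qed
  have e3: "(\<Sum>t\<in>T. 3/2 * ((C t - C (2*n - t)) * (D t - D (2*n - t)))) = 3/2 * (S2 + S1 - S3 - S4)"
    unfolding sum_distrib_left[symmetric] e2 ..
  show ?thesis unfolding L R e1 e2 e3 using rf2 unfolding S2_def[symmetric] S1_def[symmetric] by (simp add: field_simps)
qed




lemma cheb_node_inj: "inj_on (cheb_node N) {1..N}"
proof (rule inj_onI)
  fix k l assume k: "k \<in> {1..N}" and l: "l \<in> {1..N}" and e: "cheb_node N k = cheb_node N l"
  have "th N k = th N l"
    using cos_inj_pi[OF th_bounds(1) th_bounds(2) th_bounds(1) th_bounds(2)] k l e unfolding cheb_node_th by auto
  then show "k = l" using k l unfolding th_def by (auto simp: field_simps)
qed

lemma node_sub: assumes "1 \<le> l" shows "cheb_node n l = cheb_node (3 * n) (3 * l - 1)"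
proof (cases "n = 0")
  case True then show ?thesis unfolding cheb_node_def by simp
next
  case False
  note l = assms
  have "real (3 * l - 1) = 3 * real l - 1" using l by (simp add: of_nat_diff)
  then have "(2 * real l - 1) * pi / (2 * real n) = (2 * real (3 * l - 1) - 1) * pi / (2 * real (3 * n))"
    using False by (simp add: field_simps)
  then show ?thesis unfolding cheb_node_def by simp
qed

lemma Bsub: "cheb_node n ` {1..n} \<subseteq> cheb_node (3 * n) ` {1..3 * n}"
proof
  fix y assume "y \<in> cheb_node n ` {1..n}"
  then obtain l where l: "l \<in> {1..n}" "y = cheb_node n l" by auto
  then have "y = cheb_node (3 * n) (3 * l - 1)" using node_sub by auto
  moreover have "3 * l - 1 \<in> {1..3 * n}" using l by auto
  ultimately show "y \<in> cheb_node (3 * n) ` {1..3 * n}" by auto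
qed

lemma card_Y: "card (Yset n) = 2 * n"
proof -
  have "card (cheb_node (3 * n) ` {1..3 * n}) = 3 * n" using card_image[OF cheb_node_inj] by simp
  moreover have "card (cheb_node n ` {1..n}) = n" using card_image[OF cheb_node_inj] by simp
  ultimately show ?thesis unfolding Yset_def using card_Diff_subset[OF _ Bsub] by simp
qed

lemma finite_Y: "finite (Yset n)" unfolding Yset_def by simp

lemma ynode_mem: "h \<in> {1..2*n} \<Longrightarrow> ynode n h \<in> Yset n"
proof -
  assume h: "h \<in> {1..2*n}"
  have len: "length (sorted_list_of_set (Yset n)) = 2 * n" using card_Y by simp
  have "h - 1 < length (sorted_list_of_set (Yset n))" using len h by auto
  then have "sorted_list_of_set (Yset n) ! (h - 1) \<in> set (sorted_list_of_set (Yset n))" by (rule nth_mem)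
  then show ?thesis unfolding ynode_def using finite_Y by simp
qed

lemma ynode_inj: "h \<in> {1..2*n} \<Longrightarrow> h' \<in> {1..2*n} \<Longrightarrow> ynode n h = ynode n h' \<Longrightarrow> h = h'"
proof -
  assume h: "h \<in> {1..2*n}" and h': "h' \<in> {1..2*n}" and e: "ynode n h = ynode n h'"
  have len: "length (sorted_list_of_set (Yset n)) = 2 * n" using card_Y by simp
  have "h - 1 = h' - 1"
    using e unfolding ynode_def
    using nth_eq_iff_index_eq[OF distinct_sorted_list_of_set, of "h - 1" "Yset n" "h' - 1"] len h h' by auto
  then show "h = h'" using h h' by auto
qed

lemma cos_2lpi: "cos (x + real l * (2 * pi)) = cos x"
proof -
  have e: "real l * (2 * pi) = real (2 * l) * pi" by simp
  have "cos (real (2 * l) * pi) = 1" by (simp only: cos_npi) simp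
  moreover have "sin (real (2 * l) * pi) = 0" by (rule sin_npi)
  ultimately show ?thesis unfolding e cos_add by simp
qed

lemma Y_node: assumes "y \<in> Yset n"
  shows "\<exists>k\<in>{1..3*n}. y = cheb_node (3 * n) k \<and> cos (real (2*n) * th (3*n) k) = 1/2"
proof -
  obtain k where k: "k \<in> {1..3*n}" "y = cheb_node (3 * n) k" and nB: "y \<notin> cheb_node n ` {1..n}"
    using assms unfolding Yset_def by auto
  have n: "n \<ge> 1" using k by auto
  have ang: "real (2*n) * th (3*n) k = (2 * real k - 1) * pi / 3"
    unfolding th_def using n by (simp add: field_simps)
  define l where "l = k div 3"
  have "k = 3 * l + k mod 3" unfolding l_def by simp
  moreover have "k mod 3 < 3" by simp
  ultimately have "k = 3 * l \<or> k = 3 * l + 1 \<or> k = 3 * l + 2" by linarith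
  then consider "k = 3 * l" | "k = 3 * l + 1" | "k = 3 * l + 2" by blast
  then have "cos (real (2*n) * th (3*n) k) = 1/2"
  proof cases
    case 1
    then have l: "l \<ge> 1" using k by auto
    have e: "(2 * real k - 1) * pi / 3 = - (pi / 3) + real l * (2 * pi)" using 1 by (simp add: field_simps)
    show ?thesis unfolding ang e cos_2lpi cos_minus cos_60 ..
  next
    case 2
    have e: "(2 * real k - 1) * pi / 3 = pi / 3 + real l * (2 * pi)" using 2 by (simp add: field_simps)
    show ?thesis unfolding ang e cos_2lpi cos_60 ..
  next
    case 3
    have "y = cheb_node n (l + 1)" using node_sub[of "l + 1" n] k 3 by (simp add: algebra_simps)
    moreover have "l + 1 \<in> {1..n}" using k 3 by auto
    ultimately show ?thesis using nB by auto
  qed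
  then show ?thesis using k by auto
qed




lemma cW_g: assumes n: "1 \<le> n" and k: "k \<in> {1..3*n}" and y: "ynode n h = cheb_node (3 * n) k"
    and r: "n \<le> r" "r < 3 * n"
  shows "cW n r h = sqrt (2/pi) * gfun n r (th (3*n) k)"
proof -
  have cp: "cheb_p s (cheb_node (3*n) k) = sqrt (2/pi) * cos (real s * th (3*n) k)" if "s > 0" for s
    using cheb_p_node[of k "3*n" s] k that by auto
  have cp0: "cheb_p 0 (cheb_node (3*n) k) = sqrt (1/pi)" using cheb_p_node[of k "3*n" 0] k by auto
  have rp: "r > 0" using r n by auto
  consider "r = n" | "n < r" "r < 2 * n" | "r = 2 * n" | "2 * n < r" using r by linarith
  then show ?thesis
  proof cases
    case 1 then show ?thesis unfolding cW_def gfun_def Let_def y using cp rp by simp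
  next
    case 2
    have "2 * n - r > 0" using 2 by simp
    then show ?thesis unfolding cW_def gfun_def Let_def y using cp[OF rp] cp[of "2*n-r"] 2 by (simp add: field_simps)
  next
    case 3
    have "sqrt 2 * sqrt (1/pi) = sqrt (2/pi)" by (simp add: real_sqrt_mult[symmetric])
    then show ?thesis unfolding cW_def gfun_def Let_def y using cp[OF rp] cp0 3 n by (simp add: field_simps)
  next
    case 4
    then show ?thesis unfolding cW_def gfun_def Let_def y using cp[OF rp] by simp
  qed
qed

lemma psi_orth: assumes "0 < m" "m < n" "h \<in> {1..2*n}" "h' \<in> {1..2*n}"
  shows "(\<Sum>r\<in>{n..<3*n}. sigma n r h * sigma n r h') = (if h = h' then 1 else 0)"
proof -
  have n: "1 \<le> n" using assms by simp
  obtain k where k: "k \<in> {1..3*n}" "ynode n h = cheb_node (3 * n) k" "cos (real (2*n) * th (3*n) k) = 1/2"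
    using Y_node[OF ynode_mem[OF assms(3)]] by auto
  obtain k' where k': "k' \<in> {1..3*n}" "ynode n h' = cheb_node (3 * n) k'" "cos (real (2*n) * th (3*n) k') = 1/2"
    using Y_node[OF ynode_mem[OF assms(4)]] by auto
  have hk: "(h = h') = (k = k')"
    using ynode_inj[OF assms(3,4)] k k' cheb_node_inj[of "3*n"] unfolding inj_on_def by metis
  define X where "X = (\<Sum>s\<in>{1..<3*n}. cos (real s * th (3*n) k) * cos (real s * th (3*n) k'))"
  have "(\<Sum>r\<in>{n..<3*n}. sigma n r h * sigma n r h') = (\<Sum>r\<in>{n..<3*n}. 2 / (3 * real n) * (gfun n r (th (3*n) k) * gfun n r (th (3*n) k')))"
  proof (intro sum.cong refl)
    fix r assume r: "r \<in> {n..<3*n}"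
    have s: "sqrt (pi / (3 * real n)) * sqrt (pi / (3 * real n)) = pi / (3 * real n)" by simp
    have s2: "sqrt (2/pi) * sqrt (2/pi) = 2 / pi" by simp
    have "sigma n r h * sigma n r h' = (sqrt (pi / (3 * real n)) * sqrt (pi / (3 * real n))) * (sqrt (2/pi) * sqrt (2/pi)) * (gfun n r (th (3*n) k) * gfun n r (th (3*n) k'))"
    proof -
      have r1: "n \<le> r" "r < 3 * n" using r by auto
      show ?thesis unfolding sigma_def cW_g[OF n k(1,2) r1] cW_g[OF n k'(1,2) r1] by (simp only: ac_simps)
    qed
    also have "\<dots> = 2 / (3 * real n) * (gfun n r (th (3*n) k) * gfun n r (th (3*n) k'))"
      unfolding s s2 by simp
    finally show "sigma n r h * sigma n r h' = 2 / (3 * real n) * (gfun n r (th (3*n) k) * gfun n r (th (3*n) k'))" .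
  qed
  also have "\<dots> = 2 / (3 * real n) * (1/2 + X)"
    unfolding sum_distrib_left[symmetric] X_def using trigY[OF n k(3) k'(3)] by simp
  also have "\<dots> = (if k = k' then 1 else 0)"
  proof -
    have "(\<Sum>s<3*n. cheb_p s (cheb_node (3*n) k) * cheb_p s (cheb_node (3*n) k')) = 1/pi + 2/pi * X"
    proof -
      have "{..<3*n} = insert 0 {1..<3*n}" using n by auto
      then have "(\<Sum>s<3*n. cheb_p s (cheb_node (3*n) k) * cheb_p s (cheb_node (3*n) k'))
         = cheb_p 0 (cheb_node (3*n) k) * cheb_p 0 (cheb_node (3*n) k') + (\<Sum>s\<in>{1..<3*n}. cheb_p s (cheb_node (3*n) k) * cheb_p s (cheb_node (3*n) k'))"
        by simp
      also have "(\<Sum>s\<in>{1..<3*n}. cheb_p s (cheb_node (3*n) k) * cheb_p s (cheb_node (3*n) k')) = 2/pi * X"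
        unfolding X_def sum_distrib_left
      proof (intro sum.cong refl)
        fix s assume s: "s \<in> {1..<3*n}"
        have s2: "sqrt (2/pi) * sqrt (2/pi) = 2 / pi" by simp
        have "cheb_p s (cheb_node (3*n) k) * cheb_p s (cheb_node (3*n) k') = (sqrt (2/pi) * sqrt (2/pi)) * (cos (real s * th (3*n) k) * cos (real s * th (3*n) k'))"
        proof -
          have "cheb_p s (cheb_node (3*n) k) = sqrt (2/pi) * cos (real s * th (3*n) k)"
            "cheb_p s (cheb_node (3*n) k') = sqrt (2/pi) * cos (real s * th (3*n) k')"
            using cheb_p_node[of k "3*n" s] cheb_p_node[of k' "3*n" s] k(1) k'(1) s by auto
          then show ?thesis by (simp only: ac_simps)
        qed
        then show "cheb_p s (cheb_node (3*n) k) * cheb_p s (cheb_node (3*n) k') = 2/pi * (cos (real s * th (3*n) k) * cos (real s * th (3*n) k'))"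
          unfolding s2 .
      qed
      also have "cheb_p 0 (cheb_node (3*n) k) * cheb_p 0 (cheb_node (3*n) k') = 1/pi"
        using cheb_p_node[of k "3*n" 0] cheb_p_node[of k' "3*n" 0] k(1) k'(1) by simp
      finally show ?thesis .
    qed
    then have "pi / real (3*n) * (1/pi + 2/pi * X) = (if k = k' then 1 else 0)"
      using row_orth[of k "3*n" k'] k(1) k'(1) by simp
    moreover have "pi / real (3*n) * (1/pi + 2/pi * X) = 2 / (3 * real n) * (1/2 + X)"
    proof -
      have "real n > 0" using n by simp
      moreover have "pi > 0" by (rule pi_gt_zero)
      ultimately show ?thesis by (simp add: field_simps)
    qed
    ultimately show ?thesis by simp
  qed
  finally show ?thesis using hk by simp
qed




lemma sum_delta_gen: assumes "finite A" "k \<in> A" "\<And>k'. k' \<in> A \<Longrightarrow> D k' = (if k' = k then 1 else 0)"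
  shows "(\<Sum>k'\<in>A. c k' * D k') = (c k :: real)"
proof -
  have "(\<Sum>k'\<in>A. c k' * D k') = (\<Sum>k'\<in>A. if k' = k then c k' else 0)"
    using assms(3) by (intro sum.cong) auto
  then show ?thesis using assms(1,2) by simp
qed

lemma dip_comm: "dip K F G = dip K G F"
  unfolding dip_def by (simp add: mult.commute)

lemma dip_sum_left: "dip K (\<lambda>x. \<Sum>i\<in>I. c i * F i x) G = (\<Sum>i\<in>I. c i * dip K (F i) G)"
proof -
  have "dip K (\<lambda>x. \<Sum>i\<in>I. c i * F i x) G = dip K (\<lambda>x. \<Sum>i\<in>I. c i * F i x) (\<lambda>x. \<Sum>j\<in>{0::nat}. 1 * G x)"
    by simp
  also have "\<dots> = (\<Sum>i\<in>I. c i * dip K (F i) G)" by (subst dip_sums) simp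
  finally show ?thesis .
qed

lemma dip_add_left: "dip K (\<lambda>x. F x + G x) H = dip K F H + dip K G H"
  unfolding dip_def by (simp add: algebra_simps sum.distrib)

lemma dip_nodes: assumes "\<And>x. x \<in> {-1..1} \<Longrightarrow> F x = G x"
  shows "dip K F H = dip K G H"
proof -
  have "\<And>k. cheb_node K k \<in> {-1..1}" unfolding cheb_node_def by auto
  then show ?thesis unfolding dip_def using assms by simp
qed

theorem theorem4:
  fixes n m :: nat and an bn a3n :: "nat \<Rightarrow> real"
    and fn gn f3n :: "real \<Rightarrow> real"
  assumes "0 < m" and "m < n"
    and fn_def: "\<And>x. fn x = (\<Sum>k = 1..n. an k * phiV n m k x)"
    and gn_def: "\<And>x. gn x = (\<Sum>h = 1..2 * n. bn h * psiW n m h x)"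
    and f3n_def: "\<And>x. f3n x = (\<Sum>j = 1..3 * n. a3n j * phiV (3 * n) m j x)"
    and sum_eq: "\<And>x. x \<in> {-1..1} \<Longrightarrow> f3n x = fn x + gn x"
  shows "(\<forall>k \<in> {1..n}. an k = (\<Sum>j = 1..3 * n. matA n m k j * a3n j))
       \<and> (\<forall>h \<in> {1..2 * n}. bn h = (\<Sum>j = 1..3 * n. matB n m h j * a3n j))
       \<and> (\<forall>j \<in> {1..3 * n}. a3n j = (\<Sum>k = 1..n. matA n m k j * an k)
                                   + (\<Sum>h = 1..2 * n. matB n m h j * bn h))"
proof -
  define K where "K = 4 * n"
  have K: "3 * n + m \<le> K" "n + m \<le> K" "m < 3 * n" using assms(1,2) unfolding K_def by auto
  have fn: "fn = (\<lambda>x. \<Sum>k\<in>{1..n}. an k * phiV n m k x)" using fn_def by auto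
  have gn: "gn = (\<lambda>x. \<Sum>h\<in>{1..2*n}. bn h * psiW n m h x)" using gn_def by auto
  have f3n: "f3n = (\<lambda>x. \<Sum>j\<in>{1..3*n}. a3n j * phiV (3 * n) m j x)" using f3n_def by auto
  have split: "dip K f3n H = dip K fn H + dip K gn H" for H
    using dip_nodes[of f3n "\<lambda>x. fn x + gn x" K H] sum_eq dip_add_left[of K fn gn H] by simp
  have Pn: "dip K (phiV n m k) (phiV n m l) = (if k = l then 1 else 0)" if "k \<in> {1..n}" "l \<in> {1..n}" for k l
    using P1[OF assms(1,2) K(2) that] .
  have P3n: "dip K (phiV (3*n) m k) (phiV (3*n) m l) = (if k = l then 1 else 0)" if "k \<in> {1..3*n}" "l \<in> {1..3*n}" for k l
    using P1[of m "3*n" K k l] K that assms(1) by simp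
  have Pp: "dip K (psiW n m h) (psiW n m h') = (if h = h' then 1 else 0)" if "h \<in> {1..2*n}" "h' \<in> {1..2*n}" for h h'
    using P3[OF assms(1,2) K(1)] psi_orth[OF assms(1,2) that] by simp
  have Pperp: "dip K (psiW n m h) (phiV n m k) = 0" if "k \<in> {1..n}" for h k
    using P2[OF assms(1,2) K(1) that] .
  have PA: "dip K (phiV n m k) (phiV (3 * n) m j) = matA n m k j" for k j
    using P4[OF assms(1,2) K(1)] .
  have PB: "dip K (psiW n m h) (phiV (3 * n) m j) = matB n m h j" for h j
    using P5[OF assms(1,2) K(1)] .
  have PA': "dip K (phiV (3 * n) m j) (phiV n m k) = matA n m k j" for k j
    using PA dip_comm by metis
  have PB': "dip K (phiV (3 * n) m j) (psiW n m h) = matB n m h j" for h j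
    using PB dip_comm by metis
  have Pperp': "dip K (phiV n m k) (psiW n m h) = 0" if "k \<in> {1..n}" for h k
    using Pperp[OF that] dip_comm by metis
  have c1: "an k = (\<Sum>j = 1..3 * n. matA n m k j * a3n j)" if k: "k \<in> {1..n}" for k
  proof -
    have "dip K f3n (phiV n m k) = (\<Sum>j = 1..3 * n. matA n m k j * a3n j)"
      unfolding f3n dip_sum_left using PA' by (simp add: mult.commute)
    moreover have "dip K fn (phiV n m k) = an k"
      unfolding fn dip_sum_left using Pn k by (intro sum_delta_gen) auto
    moreover have "dip K gn (phiV n m k) = 0"
      unfolding gn dip_sum_left using Pperp k by simp
    ultimately show ?thesis using split by simp
  qed
  have c2: "bn h = (\<Sum>j = 1..3 * n. matB n m h j * a3n j)" if h: "h \<in> {1..2*n}" for h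
  proof -
    have "dip K f3n (psiW n m h) = (\<Sum>j = 1..3 * n. matB n m h j * a3n j)"
      unfolding f3n dip_sum_left using PB' by (simp add: mult.commute)
    moreover have "dip K fn (psiW n m h) = 0"
      unfolding fn dip_sum_left using Pperp' by simp
    moreover have "dip K gn (psiW n m h) = bn h"
      unfolding gn dip_sum_left using Pp h by (intro sum_delta_gen) auto
    ultimately show ?thesis using split by simp
  qed
  have c3: "a3n j = (\<Sum>k = 1..n. matA n m k j * an k) + (\<Sum>h = 1..2 * n. matB n m h j * bn h)" if j: "j \<in> {1..3*n}" for j
  proof -
    have "dip K f3n (phiV (3*n) m j) = a3n j"
      unfolding f3n dip_sum_left using P3n j by (intro sum_delta_gen) auto
    moreover have "dip K fn (phiV (3*n) m j) = (\<Sum>k = 1..n. matA n m k j * an k)"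
      unfolding fn dip_sum_left using PA by (simp add: mult.commute)
    moreover have "dip K gn (phiV (3*n) m j) = (\<Sum>h = 1..2 * n. matB n m h j * bn h)"
      unfolding gn dip_sum_left using PB by (simp add: mult.commute)
    ultimately show ?thesis using split by simp
  qed
  show ?thesis using c1 c2 c3 by blast
qed


end
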